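(* Let $f:X\to Y$ be a surjective function between topological spaces. Then $f$ is $gSC^*$-closed if and only if for every subset $I\subseteq Y$ and every open set $M\subseteq X$ with $f^{-1}(I)\subseteq M$ there exists a $gSC^*$-open set $N\subseteq Y$ with $I\subseteq N$ and $f^{-1}(N)\subseteq M$. Likewise, $f$ is $SC^*$-$gSC^*$-closed if and only if for every subset $I\subseteq Y$ and every $SC^*$-open set $M\subseteq X$ with $f^{-1}(I)\subseteq M$ there exists a $gSC^*$-open set $N\subseteq Y$ with $I\subseteq N$ and $f^{-1}(N)\subseteq M$.
   Context: For $A\subseteq Z$ in a topological space $Z$: $A$ is semi-open if $A\subseteq cl(int(A))$, semi-closed if its complement is semi-open; $scl(A)$ is the smallest semi-closed set containing $A$. $A$ is $c^*$-open if $int(cl(A))\subseteq A\subseteq cl(int(A))$. $A$ is $SC^*$-closed if $scl(A)\subseteq U$ whenever $A\subseteq U$ and $U$ is $c^*$-open; $A$ is $SC^*$-open if $Z\setminus A$ is $SC^*$-closed. $SC^*\text{-}cl(A)$ is the intersection of all $SC^*$-closed sets containing $A$. $A$ is $gSC^*$-closed if $SC^*\text{-}cl(A)\subseteq U$ whenever $A\subseteq U$ and $U$ is open; $A$ is $gSC^*$-open if its complement is $gSC^*$-closed. $f$ is $gSC^*$-closed if $f(J)$ is $gSC^*$-closed in $Y$ for every closed $J\subseteq X$; $f$ is $SC^*$-$gSC^*$-closed if $f(J)$ is $gSC^*$-closed in $Y$ for every $SC^*$-closed $J\subseteq X$. *)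

theory Defs
  imports "HOL-Analysis.Analysis"
begin

definition semi_open :: "'a topology \<Rightarrow> 'a set \<Rightarrow> bool" where
  "semi_open T A \<longleftrightarrow> A \<subseteq> topspace T \<and> A \<subseteq> T closure_of (T interior_of A)"

definition semi_closed :: "'a topology \<Rightarrow> 'a set \<Rightarrow> bool" where
  "semi_closed T A \<longleftrightarrow> A \<subseteq> topspace T \<and> semi_open T (topspace T - A)"

definition scl :: "'a topology \<Rightarrow> 'a set \<Rightarrow> 'a set" where
  "scl T A = topspace T \<inter> \<Inter> {S. semi_closed T S \<and> A \<subseteq> S}"

definition c_star_open :: "'a topology \<Rightarrow> 'a set \<Rightarrow> bool" where
  "c_star_open T A \<longleftrightarrow> A \<subseteq> topspace T \<and>
     T interior_of (T closure_of A) \<subseteq> A \<and> A \<subseteq> T closure_of (T interior_of A)"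

definition SC_star_closed :: "'a topology \<Rightarrow> 'a set \<Rightarrow> bool" where
  "SC_star_closed T A \<longleftrightarrow> A \<subseteq> topspace T \<and>
     (\<forall>U. c_star_open T U \<and> A \<subseteq> U \<longrightarrow> scl T A \<subseteq> U)"

definition SC_star_open :: "'a topology \<Rightarrow> 'a set \<Rightarrow> bool" where
  "SC_star_open T A \<longleftrightarrow> A \<subseteq> topspace T \<and> SC_star_closed T (topspace T - A)"

definition SC_star_cl :: "'a topology \<Rightarrow> 'a set \<Rightarrow> 'a set" where
  "SC_star_cl T A = topspace T \<inter> \<Inter> {S. SC_star_closed T S \<and> A \<subseteq> S}"

definition gSC_star_closed :: "'a topology \<Rightarrow> 'a set \<Rightarrow> bool" where
  "gSC_star_closed T A \<longleftrightarrow> A \<subseteq> topspace T \<and>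
     (\<forall>U. openin T U \<and> A \<subseteq> U \<longrightarrow> SC_star_cl T A \<subseteq> U)"

definition gSC_star_open :: "'a topology \<Rightarrow> 'a set \<Rightarrow> bool" where
  "gSC_star_open T A \<longleftrightarrow> A \<subseteq> topspace T \<and> gSC_star_closed T (topspace T - A)"

definition gSC_star_closed_map :: "'a topology \<Rightarrow> 'b topology \<Rightarrow> ('a \<Rightarrow> 'b) \<Rightarrow> bool" where
  "gSC_star_closed_map X Y f \<longleftrightarrow> (\<forall>J. closedin X J \<longrightarrow> gSC_star_closed Y (f ` J))"

definition SC_gSC_closed_map :: "'a topology \<Rightarrow> 'b topology \<Rightarrow> ('a \<Rightarrow> 'b) \<Rightarrow> bool" where
  "SC_gSC_closed_map X Y f \<longleftrightarrow> (\<forall>J. SC_star_closed X J \<longrightarrow> gSC_star_closed Y (f ` J))"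

end

theory Submission
  imports Defs
begin

lemma generic:
  fixes X :: "'a topology" and Y :: "'b topology" and f :: "'a \<Rightarrow> 'b"
  assumes surj: "f ` topspace X = topspace Y"
    and Psub: "\<And>J. P J \<Longrightarrow> J \<subseteq> topspace X"
    and Qdef: "\<And>M. Q M \<longleftrightarrow> M \<subseteq> topspace X \<and> P (topspace X - M)"
  shows "(\<forall>J. P J \<longrightarrow> gSC_star_closed Y (f ` J)) \<longleftrightarrow>
           (\<forall>I M. I \<subseteq> topspace Y \<and> Q M \<and> {x \<in> topspace X. f x \<in> I} \<subseteq> M \<longrightarrow>
              (\<exists>N. gSC_star_open Y N \<and> I \<subseteq> N \<and> {x \<in> topspace X. f x \<in> N} \<subseteq> M))"
proof
  assume H: "\<forall>J. P J \<longrightarrow> gSC_star_closed Y (f ` J)"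
  show "\<forall>I M. I \<subseteq> topspace Y \<and> Q M \<and> {x \<in> topspace X. f x \<in> I} \<subseteq> M \<longrightarrow>
              (\<exists>N. gSC_star_open Y N \<and> I \<subseteq> N \<and> {x \<in> topspace X. f x \<in> N} \<subseteq> M)"
  proof (intro allI impI)
    fix I M assume a: "I \<subseteq> topspace Y \<and> Q M \<and> {x \<in> topspace X. f x \<in> I} \<subseteq> M"
    define J where "J = topspace X - M"
    have PJ: "P J" using a Qdef J_def by blast
    have fJ: "f ` J \<subseteq> topspace Y" using surj J_def by blast
    have "gSC_star_closed Y (f ` J)" using H PJ by blast
    moreover have "topspace Y - (topspace Y - f ` J) = f ` J" using fJ by blast
    ultimately have "gSC_star_open Y (topspace Y - f ` J)" unfolding gSC_star_open_def by simp
    moreover have "I \<subseteq> topspace Y - f ` J" using a J_def by blast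
    moreover have "{x \<in> topspace X. f x \<in> topspace Y - f ` J} \<subseteq> M" using J_def by blast
    ultimately show "\<exists>N. gSC_star_open Y N \<and> I \<subseteq> N \<and> {x \<in> topspace X. f x \<in> N} \<subseteq> M" by blast
  qed
next
  assume H: "\<forall>I M. I \<subseteq> topspace Y \<and> Q M \<and> {x \<in> topspace X. f x \<in> I} \<subseteq> M \<longrightarrow>
              (\<exists>N. gSC_star_open Y N \<and> I \<subseteq> N \<and> {x \<in> topspace X. f x \<in> N} \<subseteq> M)"
  show "\<forall>J. P J \<longrightarrow> gSC_star_closed Y (f ` J)"
  proof (intro allI impI)
    fix J assume PJ: "P J"
    have Jsub: "J \<subseteq> topspace X" using Psub PJ by blast
    have "topspace X - (topspace X - J) = J" using Jsub by blast
    hence QM: "Q (topspace X - J)" using Qdef PJ by simp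
    have "{x \<in> topspace X. f x \<in> topspace Y - f ` J} \<subseteq> topspace X - J" by blast
    then obtain N where N: "gSC_star_open Y N" "topspace Y - f ` J \<subseteq> N"
        "{x \<in> topspace X. f x \<in> N} \<subseteq> topspace X - J"
      using H QM by (meson Diff_subset)
    have "topspace Y - N = f ` J"
    proof
      show "topspace Y - N \<subseteq> f ` J" using N(2) by blast
      show "f ` J \<subseteq> topspace Y - N"
      proof
        fix y assume "y \<in> f ` J"
        then obtain x where x: "x \<in> J" "y = f x" by blast
        have "f x \<in> topspace Y" using surj x Jsub by blast
        moreover have "f x \<notin> N" using N(3) x Jsub by blast
        ultimately show "y \<in> topspace Y - N" using x by simp
      qed
    qed
    thus "gSC_star_closed Y (f ` J)" using N(1) unfolding gSC_star_open_def by simp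
  qed
qed

theorem theorem4p5:
  fixes X :: "'a topology" and Y :: "'b topology" and f :: "'a \<Rightarrow> 'b"
  assumes surj: "f ` topspace X = topspace Y"
  shows "(gSC_star_closed_map X Y f \<longleftrightarrow>
           (\<forall>I M. I \<subseteq> topspace Y \<and> openin X M \<and> {x \<in> topspace X. f x \<in> I} \<subseteq> M \<longrightarrow>
              (\<exists>N. gSC_star_open Y N \<and> I \<subseteq> N \<and> {x \<in> topspace X. f x \<in> N} \<subseteq> M)))
       \<and> (SC_gSC_closed_map X Y f \<longleftrightarrow>
           (\<forall>I M. I \<subseteq> topspace Y \<and> SC_star_open X M \<and> {x \<in> topspace X. f x \<in> I} \<subseteq> M \<longrightarrow>
              (\<exists>N. gSC_star_open Y N \<and> I \<subseteq> N \<and> {x \<in> topspace X. f x \<in> N} \<subseteq> M)))"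
proof
  have q: "\<And>M. openin X M \<longleftrightarrow> M \<subseteq> topspace X \<and> closedin X (topspace X - M)"
    by (rule openin_closedin_eq)
  show "gSC_star_closed_map X Y f \<longleftrightarrow>
           (\<forall>I M. I \<subseteq> topspace Y \<and> openin X M \<and> {x \<in> topspace X. f x \<in> I} \<subseteq> M \<longrightarrow>
              (\<exists>N. gSC_star_open Y N \<and> I \<subseteq> N \<and> {x \<in> topspace X. f x \<in> N} \<subseteq> M))"
    unfolding gSC_star_closed_map_def
    by (rule generic[OF surj closedin_subset q])
  show "SC_gSC_closed_map X Y f \<longleftrightarrow>
           (\<forall>I M. I \<subseteq> topspace Y \<and> SC_star_open X M \<and> {x \<in> topspace X. f x \<in> I} \<subseteq> M \<longrightarrow>
              (\<exists>N. gSC_star_open Y N \<and> I \<subseteq> N \<and> {x \<in> topspace X. f x \<in> N} \<subseteq> M))"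
    unfolding SC_gSC_closed_map_def
    by (rule generic[OF surj _ SC_star_open_def]) (simp add: SC_star_closed_def)
qed

end
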